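(* Let $c,d>0$ with $\frac1c+\frac1d\ge1$ and $g(x)=xF(c,d;c+d;x)$ for $x\in(0,1)$. Then for all $0<x<1$ and $p,q>0$, $$g\!\left(\frac{x^p}{1+x^p}\right)g\!\left(\frac{x^q}{1+x^q}\right)\le g\!\left(\frac{x^{p+q}}{1+x^{p+q}}\right).$$
   Context: $F(a,b;c;x)$ is the Gaussian hypergeometric function $\sum_{n\ge0}\frac{(a)_n(b)_n}{(c)_n}\frac{x^n}{n!}$ ($|x|<1$), with $(a)_n=a(a+1)\cdots(a+n-1)$, $(a)_0=1$. *)

theory Defs
  imports "HOL-Analysis.Analysis"
begin

definition hyp2F1 :: "real \<Rightarrow> real \<Rightarrow> real \<Rightarrow> real \<Rightarrow> real" where
  "hyp2F1 a b c x = (\<Sum>n. pochhammer a n * pochhammer b n / pochhammer c n * x ^ n / fact n)"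

end

theory Submission
  imports Defs
begin

definition aa :: "real \<Rightarrow> real \<Rightarrow> nat \<Rightarrow> real" where
  "aa c d n = pochhammer c n * pochhammer d n / pochhammer (c + d) n / fact n"

lemma aa_pos: assumes "c > 0" "d > 0" shows "aa c d n > 0"
  using assms by (auto simp: aa_def intro!: divide_pos_pos mult_pos_pos pochhammer_pos)

lemma aa_Suc: assumes "c > 0" "d > 0"
  shows "aa c d (Suc n) = aa c d n * ((c + n) * (d + n) / ((c + d + n) * (n + 1)))"
proof -
  have "pochhammer (c + d) n > 0" using assms by (intro pochhammer_pos) auto
  moreover have "c + d + n > 0" using assms by auto
  ultimately show ?thesis
    by (simp add: aa_def pochhammer_rec' field_simps)
qed

lemma aa_dec: assumes "c > 0" "d > 0" "c * d \<le> c + d"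
  shows "aa c d (Suc n) \<le> aa c d n"
proof -
  have le: "(c + n) * (d + n) \<le> (c + d + n) * (n + 1)"
    using assms by (simp add: algebra_simps)
  have pos: "(c + d + n) * (n + 1) > 0" using assms by auto
  have "(c + n) * (d + n) / ((c + d + n) * (n + 1)) \<le> 1"
    using le pos by simp
  then show ?thesis using aa_Suc[OF assms(1,2)] aa_pos[OF assms(1,2), of n]
    by (metis mult_left_le mult.commute less_imp_le mult.right_neutral mult_left_mono)
qed

lemma aa_0: "aa c d 0 = 1" by (simp add: aa_def)

lemma aa_le1: assumes "c > 0" "d > 0" "c * d \<le> c + d" shows "aa c d n \<le> 1"
proof (induction n)
  case 0 then show ?case by (simp add: aa_0)
next
  case (Suc n) then show ?case using aa_dec[OF assms, of n] by linarith
qed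

lemma aa_summable: assumes "c > 0" "d > 0" "c * d \<le> c + d" "0 \<le> z" "z < 1"
  shows "summable (\<lambda>n. aa c d n * z ^ n)"
proof (rule summable_comparison_test[where g = "\<lambda>n. z ^ n"])
  show "\<exists>N. \<forall>n\<ge>N. norm (aa c d n * z ^ n) \<le> z ^ n"
  proof (intro exI allI impI)
    fix n :: nat
    have "\<bar>aa c d n\<bar> \<le> 1" using aa_le1[OF assms(1-3), of n] aa_pos[OF assms(1,2), of n] by simp
    then show "norm (aa c d n * z ^ n) \<le> z ^ n" using assms(4)
      by (simp add: abs_mult mult_left_le_one_le)
  qed
  show "summable (\<lambda>n. z ^ n)" using assms by (intro summable_geometric) auto
qed

lemma hyp_eq: "hyp2F1 c d (c + d) z = (\<Sum>n. aa c d n * z ^ n)"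
  unfolding hyp2F1_def aa_def by (simp add: field_simps)

definition TT :: "real \<Rightarrow> real \<Rightarrow> real \<Rightarrow> real" where
  "TT c d z = (\<Sum>n. (aa c d n - aa c d (Suc n)) * z ^ Suc n)"

lemma psi_eq: assumes "c > 0" "d > 0" "c * d \<le> c + d" "0 \<le> z" "z < 1"
  shows "(\<lambda>n. (aa c d n - aa c d (Suc n)) * z ^ Suc n) sums (1 - (1 - z) * hyp2F1 c d (c + d) z)"
proof -
  define S where "S = (\<Sum>n. aa c d n * z ^ n)"
  have s: "(\<lambda>n. aa c d n * z ^ n) sums S"
    using aa_summable[OF assms] unfolding S_def by (rule summable_sums)
  have s1: "(\<lambda>n. aa c d (Suc n) * z ^ Suc n) sums (S - 1)"
    using s by (subst sums_Suc_iff) (simp add: aa_0)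
  have s2: "(\<lambda>n. z * (aa c d n * z ^ n)) sums (z * S)"
    using s by (rule sums_mult)
  have "(\<lambda>n. z * (aa c d n * z ^ n) - aa c d (Suc n) * z ^ Suc n) sums (z * S - (S - 1))"
    using s2 s1 by (rule sums_diff)
  moreover have "z * S - (S - 1) = 1 - (1 - z) * hyp2F1 c d (c + d) z"
    by (simp add: hyp_eq S_def algebra_simps)
  moreover have "(\<lambda>n. z * (aa c d n * z ^ n) - aa c d (Suc n) * z ^ Suc n)
     = (\<lambda>n. (aa c d n - aa c d (Suc n)) * z ^ Suc n)" by (simp add: algebra_simps)
  ultimately show ?thesis by metis
qed

lemma psi_props: assumes "c > 0" "d > 0" "c * d \<le> c + d" "0 \<le> z1" "z1 \<le> z2" "z2 < 1"
  shows "(1 - z2) * hyp2F1 c d (c + d) z2 \<le> (1 - z1) * hyp2F1 c d (c + d) z1"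
proof -
  have a: "(\<lambda>n. (aa c d n - aa c d (Suc n)) * z1 ^ Suc n) sums (1 - (1 - z1) * hyp2F1 c d (c + d) z1)"
    using psi_eq[OF assms(1-3)] assms by auto
  have b: "(\<lambda>n. (aa c d n - aa c d (Suc n)) * z2 ^ Suc n) sums (1 - (1 - z2) * hyp2F1 c d (c + d) z2)"
    using psi_eq[OF assms(1-3)] assms by auto
  have "\<And>n. (aa c d n - aa c d (Suc n)) * z1 ^ Suc n \<le> (aa c d n - aa c d (Suc n)) * z2 ^ Suc n"
    using aa_dec[OF assms(1-3)] assms(4,5)
    by (intro mult_left_mono power_mono) auto
  from sums_le[OF this a b] show ?thesis by simp
qed

lemma psi_le1: assumes "c > 0" "d > 0" "c * d \<le> c + d" "0 \<le> z" "z < 1"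
  shows "(1 - z) * hyp2F1 c d (c + d) z \<le> 1"
proof -
  have a: "(\<lambda>n. (aa c d n - aa c d (Suc n)) * z ^ Suc n) sums (1 - (1 - z) * hyp2F1 c d (c + d) z)"
    using psi_eq[OF assms] by auto
  have "\<And>n. 0 \<le> (aa c d n - aa c d (Suc n)) * z ^ Suc n"
    using aa_dec[OF assms(1-3)] assms(4) by auto
  from sums_le[of "\<lambda>_. 0", OF this sums_zero a] show ?thesis by simp
qed

lemma psi_pos: assumes "c > 0" "d > 0" "c * d \<le> c + d" "0 \<le> z" "z < 1"
  shows "(1 - z) * hyp2F1 c d (c + d) z > 0"
proof -
  have "sum (\<lambda>n. aa c d n * z ^ n) {..<1} \<le> (\<Sum>n. aa c d n * z ^ n)"
    using aa_summable[OF assms] aa_pos[OF assms(1,2)] assms(4)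
    by (intro sum_le_suminf) (auto intro!: mult_nonneg_nonneg simp: less_imp_le)
  then have "hyp2F1 c d (c + d) z \<ge> 1" by (simp add: hyp_eq aa_0)
  then show ?thesis using assms by auto
qed

theorem mainTheorem16:
  fixes c d x p q :: real and g :: "real \<Rightarrow> real"
  assumes "c > 0" and "d > 0" and "1 / c + 1 / d \<ge> 1"
    and "\<And>y. 0 < y \<Longrightarrow> y < 1 \<Longrightarrow> g y = y * hyp2F1 c d (c + d) y"
    and "0 < x" and "x < 1" and "p > 0" and "q > 0"
  shows "g (x powr p / (1 + x powr p)) * g (x powr q / (1 + x powr q))
           \<le> g (x powr (p + q) / (1 + x powr (p + q)))"
proof -
  have cd: "c * d \<le> c + d"
    using assms(1-3) by (simp add: field_simps)
  define psi where "psi z = (1 - z) * hyp2F1 c d (c + d) z" for z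
  have G: "g (u / (1 + u)) = u * psi (u / (1 + u))" if "0 < u" for u
  proof -
    have "g (u / (1 + u)) = u / (1 + u) * hyp2F1 c d (c + d) (u / (1 + u))"
      using that by (intro assms(4)) auto
    moreover have "1 - u / (1 + u) = 1 / (1 + u)" using that by (simp add: field_simps)
    ultimately show ?thesis unfolding psi_def using that by (simp add: field_simps)
  qed
  define u where "u = x powr p"
  define v where "v = x powr q"
  have u: "0 < u" "u < 1" unfolding u_def using assms powr_less_mono2[of p x 1] by auto
  have v: "0 < v" "v < 1" unfolding v_def using assms powr_less_mono2[of q x 1] by auto
  have uv: "x powr (p + q) = u * v" unfolding u_def v_def by (simp add: powr_add)
  have ranges: "0 \<le> w / (1 + w)" "w / (1 + w) < 1" if "0 < w" for w :: real
    using that by auto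
  have mono: "u * v / (1 + u * v) \<le> u / (1 + u)"
  proof -
    have "u * v * (1 + u) \<le> u * (1 + u * v)" using u v
      by (simp add: algebra_simps mult_left_le)
    moreover have "0 < 1 + u" "0 < 1 + u * v" using u v by (auto simp: add_pos_pos)
    ultimately show ?thesis by (simp add: divide_le_eq le_divide_eq mult.commute mult.left_commute)
  qed
  have p1: "psi (u / (1 + u)) \<le> psi (u * v / (1 + u * v))"
    unfolding psi_def using u v
    by (intro psi_props[OF assms(1,2) cd] mono ranges) auto
  have p2: "psi (v / (1 + v)) \<le> 1" "0 < psi (v / (1 + v))" "0 < psi (u / (1 + u))"
    unfolding psi_def using u v
    by (auto intro!: psi_le1[OF assms(1,2) cd] psi_pos[OF assms(1,2) cd] ranges)
  have "u * psi (u / (1 + u)) * (v * psi (v / (1 + v))) = (u * v) * (psi (u / (1 + u)) * psi (v / (1 + v)))"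
    by simp
  also have "\<dots> \<le> (u * v) * psi (u * v / (1 + u * v))"
    using u v p1 p2
    by (intro mult_left_mono) (auto intro: order.trans[OF mult_left_le])
  finally show ?thesis
    using G u v uv unfolding u_def[symmetric] v_def[symmetric] by (simp add: uv)
qed

end
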